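(* If $X,Y,Z,W$ are independent real-valued continuous random variables, then $$h(X+Y+Z+W)+h(Y)+h(Z)\leq h(X+Y)+h(Y+Z)+h(Z+W).$$
   Context: Standing conventions: random variables are real-valued with densities and all differential entropies $h$ appearing exist and are finite. *)

theory Defs
  imports "HOL-Probability.Probability"
begin

definition diff_entropy :: "'a measure \<Rightarrow> ('a \<Rightarrow> real) \<Rightarrow> real" where
  "diff_entropy M V = prob_space.entropy M (exp 1) lborel V"

definition has_finite_diff_entropy :: "'a measure \<Rightarrow> ('a \<Rightarrow> real) \<Rightarrow> bool" where
  "has_finite_diff_entropy M V \<longleftrightarrow>
     (\<exists>f. distributed M lborel V f \<and> (\<forall>x. 0 \<le> f x) \<and>
          integrable lborel (\<lambda>x. f x * ln (f x)))"

end

theory Submission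
  imports Defs
begin

lemma joint4:
  fixes X Y Z W :: "'a \<Rightarrow> real" and F :: "real \<times> real \<times> real \<times> real \<Rightarrow> ennreal"
  assumes P: "prob_space M"
    and ind: "prob_space.indep_vars M (\<lambda>_. borel) (\<lambda>i::nat. [X, Y, Z, W] ! i) {0, 1, 2, 3}"
    and dX: "distributed M lborel X pX" and dY: "distributed M lborel Y pY"
    and dZ: "distributed M lborel Z pZ" and dW: "distributed M lborel W pW"
    and Fm[measurable]: "F \<in> borel_measurable (borel \<Otimes>\<^sub>M borel \<Otimes>\<^sub>M borel \<Otimes>\<^sub>M borel)"
  shows "(\<integral>\<^sup>+\<omega>. F (X \<omega>, Y \<omega>, Z \<omega>, W \<omega>) \<partial>M) =
    (\<integral>\<^sup>+x. pX x * (\<integral>\<^sup>+y. pY y * (\<integral>\<^sup>+z. pZ z * (\<integral>\<^sup>+w. pW w * F (x, y, z, w) \<partial>lborel) \<partial>lborel) \<partial>lborel) \<partial>lborel)"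
proof -
  interpret prob_space M by (rule P)
  define V where "V = (\<lambda>i::nat. if i = 0 then X else if i = 1 then Y else if i = 2 then Z else W)"
  define I where "I = {0,1,2,3::nat}"
  have mX[measurable]: "X \<in> borel_measurable M" using dX by (simp add: distributed_def)
  have mY[measurable]: "Y \<in> borel_measurable M" using dY by (simp add: distributed_def)
  have mZ[measurable]: "Z \<in> borel_measurable M" using dZ by (simp add: distributed_def)
  have mW[measurable]: "W \<in> borel_measurable M" using dW by (simp add: distributed_def)
  have pm[measurable]: "pX \<in> borel_measurable borel" "pY \<in> borel_measurable borel" "pZ \<in> borel_measurable borel" "pW \<in> borel_measurable borel"
    using dX dY dZ dW by (auto simp: distributed_def)
  have rv: "\<And>i. random_variable borel (V i)" by (simp add: V_def)
  have indV: "indep_vars (\<lambda>_. borel) V I"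
  proof -
    have "indep_vars (\<lambda>_. borel) V I = indep_vars (\<lambda>_. borel) (\<lambda>i::nat. [X, Y, Z, W] ! i) I"
      by (intro indep_vars_cong) (auto simp: V_def I_def)
    with ind show ?thesis by (simp add: I_def)
  qed
  define Nm where "Nm = (\<lambda>i. distr M borel (V i))"
  have distrPi: "distr M (\<Pi>\<^sub>M i\<in>I. borel) (\<lambda>x. \<lambda>i\<in>I. V i x) = (\<Pi>\<^sub>M i\<in>I. Nm i)"
    using indV indep_vars_iff_distr_eq_PiM[where I=I and M'="\<lambda>_. borel" and X=V] rv unfolding Nm_def I_def by auto
  have setsNm[measurable_cong]: "sets (Nm i) = sets borel" for i by (simp add: Nm_def)
  interpret Nm: product_sigma_finite Nm
    unfolding product_sigma_finite_def Nm_def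
  proof
    fix i show "sigma_finite_measure (distr M borel (V i))"
      by (rule prob_space_imp_sigma_finite, rule prob_space_distr, rule rv)
  qed
  have N0: "Nm 0 = density lborel pX" using dX unfolding Nm_def V_def distributed_def
    by (auto cong: distr_cong)
  have N1: "Nm 1 = density lborel pY" using dY unfolding Nm_def V_def distributed_def
    by (auto cong: distr_cong)
  have N2: "Nm 2 = density lborel pZ" using dZ unfolding Nm_def V_def distributed_def
    by (auto cong: distr_cong)
  have N3: "Nm 3 = density lborel pW" using dW unfolding Nm_def V_def distributed_def
    by (auto cong: distr_cong)
  have "(\<integral>\<^sup>+\<omega>. F (X \<omega>, Y \<omega>, Z \<omega>, W \<omega>) \<partial>M) = (\<integral>\<^sup>+v. F (v 0, v 1, v 2, v 3) \<partial>distr M (\<Pi>\<^sub>M i\<in>I. borel) (\<lambda>x. \<lambda>i\<in>I. V i x))"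
    by (subst nn_integral_distr) (auto simp: I_def V_def intro!: measurable_restrict)
  also have "\<dots> = (\<integral>\<^sup>+v. F (v 0, v 1, v 2, v 3) \<partial>(\<Pi>\<^sub>M i\<in>insert 0 {1,2,3}. Nm i))"
    using distrPi by (simp add: I_def)
  also have "\<dots> = (\<integral>\<^sup>+x. \<integral>\<^sup>+v. F (x, v 1, v 2, v 3) \<partial>(\<Pi>\<^sub>M i\<in>insert 1 {2,3}. Nm i) \<partial>Nm 0)"
    by (subst Nm.product_nn_integral_insert_rev) auto
  also have "\<dots> = (\<integral>\<^sup>+x. \<integral>\<^sup>+y. \<integral>\<^sup>+v. F (x, y, v 2, v 3) \<partial>(\<Pi>\<^sub>M i\<in>insert 2 {3}. Nm i) \<partial>Nm 1 \<partial>Nm 0)"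
    by (subst Nm.product_nn_integral_insert_rev) auto
  also have "\<dots> = (\<integral>\<^sup>+x. \<integral>\<^sup>+y. \<integral>\<^sup>+z. \<integral>\<^sup>+v. F (x, y, z, v 3) \<partial>(\<Pi>\<^sub>M i\<in>{3}. Nm i) \<partial>Nm 2 \<partial>Nm 1 \<partial>Nm 0)"
    by (subst Nm.product_nn_integral_insert_rev) auto
  also have "\<dots> = (\<integral>\<^sup>+x. \<integral>\<^sup>+y. \<integral>\<^sup>+z. \<integral>\<^sup>+w. F (x, y, z, w) \<partial>Nm 3 \<partial>Nm 2 \<partial>Nm 1 \<partial>Nm 0)"
    by (subst Nm.product_nn_integral_singleton) auto
  also have "\<dots> = (\<integral>\<^sup>+x. pX x * (\<integral>\<^sup>+y. pY y * (\<integral>\<^sup>+z. pZ z * (\<integral>\<^sup>+w. pW w * F (x, y, z, w) \<partial>lborel) \<partial>lborel) \<partial>lborel) \<partial>lborel)"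
  proof -
    have i3: "(\<integral>\<^sup>+w. F (x, y, z, w) \<partial>Nm 3) = (\<integral>\<^sup>+w. pW w * F (x, y, z, w) \<partial>lborel)" for x y z
      unfolding N3 by (rule nn_integral_density) measurable
    have i2: "(\<integral>\<^sup>+z. \<integral>\<^sup>+w. F (x, y, z, w) \<partial>Nm 3 \<partial>Nm 2) = (\<integral>\<^sup>+z. pZ z * (\<integral>\<^sup>+w. pW w * F (x, y, z, w) \<partial>lborel) \<partial>lborel)" for x y
      unfolding i3 N2 by (rule nn_integral_density) measurable
    have i1: "(\<integral>\<^sup>+y. \<integral>\<^sup>+z. \<integral>\<^sup>+w. F (x, y, z, w) \<partial>Nm 3 \<partial>Nm 2 \<partial>Nm 1) = (\<integral>\<^sup>+y. pY y * (\<integral>\<^sup>+z. pZ z * (\<integral>\<^sup>+w. pW w * F (x, y, z, w) \<partial>lborel) \<partial>lborel) \<partial>lborel)" for x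
      unfolding i2 N1 by (rule nn_integral_density) measurable
    show ?thesis
      unfolding i1 N0 by (rule nn_integral_density) measurable
  qed
  finally show ?thesis .
qed


lemma swap_int:
  fixes f :: "real \<Rightarrow> real \<Rightarrow> ennreal"
  assumes "case_prod f \<in> borel_measurable (borel \<Otimes>\<^sub>M borel)"
  shows "(\<integral>\<^sup>+x. \<integral>\<^sup>+y. f x y \<partial>lborel \<partial>lborel) = (\<integral>\<^sup>+y. \<integral>\<^sup>+x. f x y \<partial>lborel \<partial>lborel)"
proof -
  have e: "sets (lborel \<Otimes>\<^sub>M lborel) = sets (borel \<Otimes>\<^sub>M (borel::real measure))"
    by (rule sets_pair_measure_cong) simp_all
  have "case_prod f \<in> borel_measurable (lborel \<Otimes>\<^sub>M lborel)"
    using assms measurable_cong_sets[OF e refl] by blast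
  from lborel_pair.Fubini'[OF this] show ?thesis by simp
qed
lemma shift_int:
  fixes f :: "real \<Rightarrow> ennreal"
  assumes [measurable]: "f \<in> borel_measurable borel"
  shows "(\<integral>\<^sup>+z. f z \<partial>lborel) = (\<integral>\<^sup>+s. f (s + t) \<partial>lborel)"
  using nn_integral_real_affine[OF assms, of 1 t] by (simp add: add.commute)

lemma refl_int:
  fixes f :: "real \<Rightarrow> ennreal"
  assumes [measurable]: "f \<in> borel_measurable borel"
  shows "(\<integral>\<^sup>+z. f z \<partial>lborel) = (\<integral>\<^sup>+s. f (t - s) \<partial>lborel)"
  using nn_integral_real_affine[OF assms, of "-1" t] by simp
lemma bound_inner:
  fixes pW pA pB pC pS :: "real \<Rightarrow> real" and x :: real
  assumes [measurable]: "pW \<in> borel_measurable borel" "pA \<in> borel_measurable borel"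
    "pB \<in> borel_measurable borel" "pC \<in> borel_measurable borel" "pS \<in> borel_measurable borel"
    and nn: "\<And>t. 0 \<le> pW t" "\<And>t. 0 \<le> pA t" "\<And>t. 0 \<le> pB t" "\<And>t. 0 \<le> pC t" "\<And>t. 0 \<le> pS t"
    and intW: "(\<integral>\<^sup>+w. ennreal (pW w) \<partial>lborel) = 1" and intB: "(\<integral>\<^sup>+s. ennreal (pB s) \<partial>lborel) = 1"
    and conv: "AE s in lborel. (\<integral>\<^sup>+u. ennreal (pA (s - u)) * ennreal (pC u) \<partial>lborel) = ennreal (pS s)"
  shows "(\<integral>\<^sup>+y. \<integral>\<^sup>+z. \<integral>\<^sup>+w. ennreal (pW w * pA (x+y) * pB (y+z) * pC (z+w) / pS (x+y+z+w)) \<partial>lborel \<partial>lborel \<partial>lborel) \<le> 1"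
proof -
  define H where "H = (\<lambda>y w s. ennreal (pW w * pA (x+y) * pB (s-x-w) * pC (s-x-y) / pS s))"
  have Hm[measurable]: "(\<lambda>(y, w, s). H y w s) \<in> borel_measurable (borel \<Otimes>\<^sub>M borel \<Otimes>\<^sub>M borel)"
    unfolding H_def by measurable
  have "(\<integral>\<^sup>+y. \<integral>\<^sup>+z. \<integral>\<^sup>+w. ennreal (pW w * pA (x+y) * pB (y+z) * pC (z+w) / pS (x+y+z+w)) \<partial>lborel \<partial>lborel \<partial>lborel)
     = (\<integral>\<^sup>+y. \<integral>\<^sup>+w. \<integral>\<^sup>+z. ennreal (pW w * pA (x+y) * pB (y+z) * pC (z+w) / pS (x+y+z+w)) \<partial>lborel \<partial>lborel \<partial>lborel)"
    by (rule nn_integral_cong, rule swap_int) measurable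
  also have "\<dots> = (\<integral>\<^sup>+y. \<integral>\<^sup>+w. \<integral>\<^sup>+s. H y w s \<partial>lborel \<partial>lborel \<partial>lborel)"
  proof (rule nn_integral_cong, rule nn_integral_cong)
    fix y w
    have "(\<integral>\<^sup>+z. ennreal (pW w * pA (x+y) * pB (y+z) * pC (z+w) / pS (x+y+z+w)) \<partial>lborel)
      = (\<integral>\<^sup>+s. ennreal (pW w * pA (x+y) * pB (y+(s + (-x-y-w))) * pC ((s + (-x-y-w))+w) / pS (x+y+(s + (-x-y-w))+w)) \<partial>lborel)"
      by (rule shift_int) measurable
    also have "\<dots> = (\<integral>\<^sup>+s. H y w s \<partial>lborel)"
      unfolding H_def by (intro nn_integral_cong) (simp add: algebra_simps)
    finally show "(\<integral>\<^sup>+z. ennreal (pW w * pA (x+y) * pB (y+z) * pC (z+w) / pS (x+y+z+w)) \<partial>lborel) = (\<integral>\<^sup>+s. H y w s \<partial>lborel)" .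
  qed
  also have "\<dots> = (\<integral>\<^sup>+w. \<integral>\<^sup>+y. \<integral>\<^sup>+s. H y w s \<partial>lborel \<partial>lborel \<partial>lborel)"
    by (rule swap_int) (unfold H_def, measurable)
  also have "\<dots> = (\<integral>\<^sup>+w. \<integral>\<^sup>+s. \<integral>\<^sup>+y. H y w s \<partial>lborel \<partial>lborel \<partial>lborel)"
    by (rule nn_integral_cong, rule swap_int) (unfold H_def, measurable)
  also have "\<dots> = (\<integral>\<^sup>+w. \<integral>\<^sup>+s. ennreal (pW w * pB (s-x-w) / pS s) * (\<integral>\<^sup>+u. ennreal (pA (s - u)) * ennreal (pC u) \<partial>lborel) \<partial>lborel \<partial>lborel)"
  proof (rule nn_integral_cong, rule nn_integral_cong)
    fix w s
    have "(\<integral>\<^sup>+y. H y w s \<partial>lborel) = (\<integral>\<^sup>+y. ennreal (pW w * pB (s-x-w) / pS s) * ennreal (pA (x+y) * pC (s-x-y)) \<partial>lborel)"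
      unfolding H_def
    proof (rule nn_integral_cong)
      fix y
      have "pW w * pA (x+y) * pB (s-x-w) * pC (s-x-y) / pS s = (pW w * pB (s-x-w) / pS s) * (pA (x+y) * pC (s-x-y))"
        by (simp add: field_simps)
      then show "ennreal (pW w * pA (x+y) * pB (s-x-w) * pC (s-x-y) / pS s) = ennreal (pW w * pB (s-x-w) / pS s) * ennreal (pA (x+y) * pC (s-x-y))"
        by (subst ennreal_mult[symmetric]) (auto simp: nn intro!: divide_nonneg_nonneg mult_nonneg_nonneg)
    qed
    also have "\<dots> = ennreal (pW w * pB (s-x-w) / pS s) * (\<integral>\<^sup>+y. ennreal (pA (x+y) * pC (s-x-y)) \<partial>lborel)"
      by (rule nn_integral_cmult) measurable
    also have "(\<integral>\<^sup>+y. ennreal (pA (x+y) * pC (s-x-y)) \<partial>lborel) = (\<integral>\<^sup>+u. ennreal (pA (x+((s-x)-u)) * pC (s-x-((s-x)-u))) \<partial>lborel)"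
      by (rule refl_int) measurable
    also have "\<dots> = (\<integral>\<^sup>+u. ennreal (pA (s - u)) * ennreal (pC u) \<partial>lborel)"
      by (intro nn_integral_cong) (simp add: ennreal_mult nn)
    finally show "(\<integral>\<^sup>+y. H y w s \<partial>lborel) = ennreal (pW w * pB (s-x-w) / pS s) * (\<integral>\<^sup>+u. ennreal (pA (s - u)) * ennreal (pC u) \<partial>lborel)" .
  qed
  also have "\<dots> \<le> (\<integral>\<^sup>+w. \<integral>\<^sup>+s. ennreal (pW w) * ennreal (pB (s-x-w)) \<partial>lborel \<partial>lborel)"
  proof (rule nn_integral_mono, rule nn_integral_mono_AE)
    fix w
    show "AE s in lborel. ennreal (pW w * pB (s-x-w) / pS s) * (\<integral>\<^sup>+u. ennreal (pA (s - u)) * ennreal (pC u) \<partial>lborel) \<le> ennreal (pW w) * ennreal (pB (s-x-w))"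
      using conv
    proof eventually_elim
      case (elim s)
      have "pW w * pB (s-x-w) / pS s * pS s \<le> pW w * pB (s-x-w)"
        using nn[of w] nn[of "s-x-w"] by (cases "pS s = 0") auto
      then show ?case unfolding elim
        by (simp add: ennreal_mult[symmetric] nn divide_nonneg_nonneg del: ennreal_mult)
    qed
  qed
  also have "\<dots> = (\<integral>\<^sup>+w. ennreal (pW w) * (\<integral>\<^sup>+s. ennreal (pB (s-x-w)) \<partial>lborel) \<partial>lborel)"
    by (rule nn_integral_cong, rule nn_integral_cmult) measurable
  also have "\<dots> = (\<integral>\<^sup>+w. ennreal (pW w) \<partial>lborel)"
  proof (rule nn_integral_cong)
    fix w
    have "(\<integral>\<^sup>+s. ennreal (pB s) \<partial>lborel) = (\<integral>\<^sup>+s. ennreal (pB (s + (-x-w))) \<partial>lborel)"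
      by (rule shift_int) measurable
    also have "\<dots> = (\<integral>\<^sup>+s. ennreal (pB (s-x-w)) \<partial>lborel)"
      by (rule nn_integral_cong) (simp add: algebra_simps)
    finally have "(\<integral>\<^sup>+s. ennreal (pB (s-x-w)) \<partial>lborel) = (\<integral>\<^sup>+s. ennreal (pB s) \<partial>lborel)" ..
    then show "ennreal (pW w) * (\<integral>\<^sup>+s. ennreal (pB (s-x-w)) \<partial>lborel) = ennreal (pW w)"
      using intB by simp
  qed
  finally show ?thesis using intW by simp
qed


lemma dens_int1:
  assumes P: "prob_space M" and d: "distributed M lborel V (\<lambda>x. ennreal (f x))"
  shows "(\<integral>\<^sup>+x. ennreal (f x) \<partial>lborel) = 1"
proof -
  interpret prob_space M by (rule P)
  have "emeasure M (V -` UNIV \<inter> space M) = (\<integral>\<^sup>+x. ennreal (f x) * indicator UNIV x \<partial>lborel)"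
    by (rule distributed_emeasure[OF d]) simp
  then show ?thesis by (simp add: emeasure_space_1)
qed

lemma dent:
  assumes P: "prob_space M" and d: "distributed M lborel V (\<lambda>x. ennreal (f x))"
    and nn: "\<And>x. 0 \<le> f x" and i: "integrable lborel (\<lambda>x. f x * ln (f x))"
  shows "diff_entropy M V = - (\<integral>x. f x * ln (f x) \<partial>lborel)"
    and "(\<integral>x. f x * ln (f x) \<partial>lborel) = (\<integral>\<omega>. ln (f (V \<omega>)) \<partial>M)"
    and "integrable M (\<lambda>\<omega>. ln (f (V \<omega>)))"
proof -
  interpret information_space M "exp 1"
    using P by (simp add: information_space_def information_space_axioms_def)
  have fm[measurable]: "f \<in> borel_measurable borel"
    using distributed_real_measurable[OF _ d] nn by simp
  show "diff_entropy M V = - (\<integral>x. f x * ln (f x) \<partial>lborel)"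
    unfolding diff_entropy_def using entropy_distr[OF d] nn by (simp add: log_def)
  show "(\<integral>x. f x * ln (f x) \<partial>lborel) = (\<integral>\<omega>. ln (f (V \<omega>)) \<partial>M)"
    by (rule distributed_integral[OF d]) (auto simp: nn)
  show "integrable M (\<lambda>\<omega>. ln (f (V \<omega>)))"
    using distributed_integrable[OF d, of "\<lambda>x. ln (f x)"] i nn by simp
qed


lemma indep_sums:
  fixes X Y Z W :: "'a \<Rightarrow> real"
  assumes P: "prob_space M"
    and ind: "prob_space.indep_vars M (\<lambda>_. borel) (\<lambda>i::nat. [X, Y, Z, W] ! i) {0, 1, 2, 3}"
  shows "prob_space.indep_var M borel (\<lambda>\<omega>. X \<omega> + Y \<omega>) borel (\<lambda>\<omega>. Z \<omega> + W \<omega>)"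
proof -
  interpret prob_space M by (rule P)
  have "indep_var borel ((\<lambda>f. f 0 + f 1) \<circ> (\<lambda>\<omega>. restrict (\<lambda>i. ([X, Y, Z, W] ! i) \<omega>) {0::nat, 1}))
      borel ((\<lambda>f. f 2 + f 3) \<circ> (\<lambda>\<omega>. restrict (\<lambda>i. ([X, Y, Z, W] ! i) \<omega>) {2::nat, 3}))"
    by (intro indep_var_compose[OF indep_var_restrict[OF ind]]) auto
  also have "((\<lambda>f. f 0 + f 1) \<circ> (\<lambda>\<omega>. restrict (\<lambda>i. ([X, Y, Z, W] ! i) \<omega>) {0::nat, 1})) = (\<lambda>\<omega>. X \<omega> + Y \<omega>)"
    by (auto simp: fun_eq_iff)
  also have "((\<lambda>f. f 2 + f 3) \<circ> (\<lambda>\<omega>. restrict (\<lambda>i. ([X, Y, Z, W] ! i) \<omega>) {2::nat, 3})) = (\<lambda>\<omega>. Z \<omega> + W \<omega>)"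
    by (auto simp: fun_eq_iff numeral_eq_Suc)
  finally show ?thesis .
qed


lemma core:
  fixes X Y Z W :: "'a \<Rightarrow> real" and fX fY fZ fW fA fB fC fS :: "real \<Rightarrow> real"
  assumes P: "prob_space M"
    and ind: "prob_space.indep_vars M (\<lambda>_. borel) (\<lambda>i::nat. [X, Y, Z, W] ! i) {0, 1, 2, 3}"
    and dX: "distributed M lborel X (\<lambda>x. ennreal (fX x))"
    and dY: "distributed M lborel Y (\<lambda>x. ennreal (fY x))"
    and dZ: "distributed M lborel Z (\<lambda>x. ennreal (fZ x))"
    and dW: "distributed M lborel W (\<lambda>x. ennreal (fW x))"
    and dA: "distributed M lborel (\<lambda>\<omega>. X \<omega> + Y \<omega>) (\<lambda>x. ennreal (fA x))"
    and dB: "distributed M lborel (\<lambda>\<omega>. Y \<omega> + Z \<omega>) (\<lambda>x. ennreal (fB x))"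
    and dC: "distributed M lborel (\<lambda>\<omega>. Z \<omega> + W \<omega>) (\<lambda>x. ennreal (fC x))"
    and dS: "distributed M lborel (\<lambda>\<omega>. X \<omega> + Y \<omega> + Z \<omega> + W \<omega>) (\<lambda>x. ennreal (fS x))"
    and nn: "\<And>x. 0 \<le> fX x" "\<And>x. 0 \<le> fY x" "\<And>x. 0 \<le> fZ x" "\<And>x. 0 \<le> fW x"
      "\<And>x. 0 \<le> fA x" "\<And>x. 0 \<le> fB x" "\<And>x. 0 \<le> fC x" "\<And>x. 0 \<le> fS x"
  shows "(\<integral>\<^sup>+\<omega>. ennreal (fA (X \<omega> + Y \<omega>) * fB (Y \<omega> + Z \<omega>) * fC (Z \<omega> + W \<omega>) /
            (fS (X \<omega> + Y \<omega> + Z \<omega> + W \<omega>) * fY (Y \<omega>) * fZ (Z \<omega>))) \<partial>M) \<le> 1"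
proof -
  interpret prob_space M by (rule P)
  have m[measurable]: "fX \<in> borel_measurable borel" "fY \<in> borel_measurable borel" "fZ \<in> borel_measurable borel"
    "fW \<in> borel_measurable borel" "fA \<in> borel_measurable borel" "fB \<in> borel_measurable borel"
    "fC \<in> borel_measurable borel" "fS \<in> borel_measurable borel"
    using distributed_real_measurable[OF _ dX] distributed_real_measurable[OF _ dY]
      distributed_real_measurable[OF _ dZ] distributed_real_measurable[OF _ dW]
      distributed_real_measurable[OF _ dA] distributed_real_measurable[OF _ dB]
      distributed_real_measurable[OF _ dC] distributed_real_measurable[OF _ dS] nn
    by auto
  define Rf where "Rf = (\<lambda>x y z w. fA (x+y) * fB (y+z) * fC (z+w) / (fS (x+y+z+w) * fY y * fZ z))"
  have Rfm[measurable]: "(\<lambda>(x,y,z,w). ennreal (Rf x y z w)) \<in> borel_measurable (borel \<Otimes>\<^sub>M borel \<Otimes>\<^sub>M borel \<Otimes>\<^sub>M borel)"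
    unfolding Rf_def by measurable
  have J: "(\<integral>\<^sup>+\<omega>. ennreal (fA (X \<omega> + Y \<omega>) * fB (Y \<omega> + Z \<omega>) * fC (Z \<omega> + W \<omega>) /
            (fS (X \<omega> + Y \<omega> + Z \<omega> + W \<omega>) * fY (Y \<omega>) * fZ (Z \<omega>))) \<partial>M)
    = (\<integral>\<^sup>+x. ennreal (fX x) * (\<integral>\<^sup>+y. ennreal (fY y) * (\<integral>\<^sup>+z. ennreal (fZ z) *
        (\<integral>\<^sup>+w. ennreal (fW w) * ennreal (Rf x y z w) \<partial>lborel) \<partial>lborel) \<partial>lborel) \<partial>lborel)"
    using joint4[OF P ind dX dY dZ dW Rfm] by (simp add: Rf_def)
  have conv: "AE s in lborel. (\<integral>\<^sup>+u. ennreal (fA (s - u)) * ennreal (fC u) \<partial>lborel) = ennreal (fS s)"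
  proof -
    have "distributed M lborel (\<lambda>\<omega>. (X \<omega> + Y \<omega>) + (Z \<omega> + W \<omega>)) (\<lambda>s. \<integral>\<^sup>+u. ennreal (fA (s - u)) * ennreal (fC u) \<partial>lborel)"
      by (rule distributed_convolution[OF indep_sums[OF P ind] dA dC])
    moreover have "(\<lambda>\<omega>. (X \<omega> + Y \<omega>) + (Z \<omega> + W \<omega>)) = (\<lambda>\<omega>. X \<omega> + Y \<omega> + Z \<omega> + W \<omega>)"
      by (simp add: fun_eq_iff add.assoc)
    ultimately show ?thesis using distributed_unique[OF _ dS] by simp
  qed
  have inner: "(\<integral>\<^sup>+y. ennreal (fY y) * (\<integral>\<^sup>+z. ennreal (fZ z) *
        (\<integral>\<^sup>+w. ennreal (fW w) * ennreal (Rf x y z w) \<partial>lborel) \<partial>lborel) \<partial>lborel) \<le> 1" for x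
  proof -
    have "(\<integral>\<^sup>+y. ennreal (fY y) * (\<integral>\<^sup>+z. ennreal (fZ z) *
        (\<integral>\<^sup>+w. ennreal (fW w) * ennreal (Rf x y z w) \<partial>lborel) \<partial>lborel) \<partial>lborel)
      \<le> (\<integral>\<^sup>+y. \<integral>\<^sup>+z. \<integral>\<^sup>+w. ennreal (fW w * fA (x+y) * fB (y+z) * fC (z+w) / fS (x+y+z+w)) \<partial>lborel \<partial>lborel \<partial>lborel)"
    proof (rule nn_integral_mono)
      fix y
      have "ennreal (fY y) * (\<integral>\<^sup>+z. ennreal (fZ z) * (\<integral>\<^sup>+w. ennreal (fW w) * ennreal (Rf x y z w) \<partial>lborel) \<partial>lborel)
        = (\<integral>\<^sup>+z. ennreal (fY y) * (ennreal (fZ z) * (\<integral>\<^sup>+w. ennreal (fW w) * ennreal (Rf x y z w) \<partial>lborel)) \<partial>lborel)"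
        by (rule nn_integral_cmult[symmetric]) (unfold Rf_def, measurable)
      also have "\<dots> = (\<integral>\<^sup>+z. \<integral>\<^sup>+w. ennreal (fY y) * (ennreal (fZ z) * (ennreal (fW w) * ennreal (Rf x y z w))) \<partial>lborel \<partial>lborel)"
      proof (rule nn_integral_cong)
        fix z
        have "ennreal (fZ z) * (\<integral>\<^sup>+w. ennreal (fW w) * ennreal (Rf x y z w) \<partial>lborel)
          = (\<integral>\<^sup>+w. ennreal (fZ z) * (ennreal (fW w) * ennreal (Rf x y z w)) \<partial>lborel)"
          by (rule nn_integral_cmult[symmetric]) (unfold Rf_def, measurable)
        also have "ennreal (fY y) * \<dots> = (\<integral>\<^sup>+w. ennreal (fY y) * (ennreal (fZ z) * (ennreal (fW w) * ennreal (Rf x y z w))) \<partial>lborel)"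
          by (rule nn_integral_cmult[symmetric]) (unfold Rf_def, measurable)
        finally show "ennreal (fY y) * (ennreal (fZ z) * (\<integral>\<^sup>+w. ennreal (fW w) * ennreal (Rf x y z w) \<partial>lborel))
          = (\<integral>\<^sup>+w. ennreal (fY y) * (ennreal (fZ z) * (ennreal (fW w) * ennreal (Rf x y z w))) \<partial>lborel)" by simp
      qed
      also have "\<dots> \<le> (\<integral>\<^sup>+z. \<integral>\<^sup>+w. ennreal (fW w * fA (x+y) * fB (y+z) * fC (z+w) / fS (x+y+z+w)) \<partial>lborel \<partial>lborel)"
      proof (rule nn_integral_mono, rule nn_integral_mono)
        fix z w
        have r: "fY y * (fZ z * (fW w * Rf x y z w)) \<le> fW w * fA (x+y) * fB (y+z) * fC (z+w) / fS (x+y+z+w)"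
        proof (cases "fY y = 0 \<or> fZ z = 0")
          case True then show ?thesis
            using nn by (auto intro!: divide_nonneg_nonneg mult_nonneg_nonneg)
        next
          case False
          then have "fY y * (fZ z * (fW w * Rf x y z w)) = fW w * fA (x+y) * fB (y+z) * fC (z+w) / fS (x+y+z+w)"
            unfolding Rf_def by (simp add: field_simps)
          then show ?thesis by simp
        qed
        have "0 \<le> Rf x y z w" unfolding Rf_def using nn by (auto intro!: divide_nonneg_nonneg mult_nonneg_nonneg)
        then have "ennreal (fY y) * (ennreal (fZ z) * (ennreal (fW w) * ennreal (Rf x y z w)))
            = ennreal (fY y * (fZ z * (fW w * Rf x y z w)))"
          using nn by (simp add: ennreal_mult)
        also have "\<dots> \<le> ennreal (fW w * fA (x+y) * fB (y+z) * fC (z+w) / fS (x+y+z+w))"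
          using r by (rule ennreal_leI)
        finally show "ennreal (fY y) * (ennreal (fZ z) * (ennreal (fW w) * ennreal (Rf x y z w)))
            \<le> ennreal (fW w * fA (x+y) * fB (y+z) * fC (z+w) / fS (x+y+z+w))" .
      qed
      finally show "ennreal (fY y) * (\<integral>\<^sup>+z. ennreal (fZ z) * (\<integral>\<^sup>+w. ennreal (fW w) * ennreal (Rf x y z w) \<partial>lborel) \<partial>lborel)
        \<le> (\<integral>\<^sup>+z. \<integral>\<^sup>+w. ennreal (fW w * fA (x+y) * fB (y+z) * fC (z+w) / fS (x+y+z+w)) \<partial>lborel \<partial>lborel)" .
    qed
    also have "\<dots> \<le> 1"
      by (rule bound_inner) (use nn conv dens_int1[OF P dW] dens_int1[OF P dB] in auto)
    finally show ?thesis .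
  qed
  have "(\<integral>\<^sup>+x. ennreal (fX x) * (\<integral>\<^sup>+y. ennreal (fY y) * (\<integral>\<^sup>+z. ennreal (fZ z) *
        (\<integral>\<^sup>+w. ennreal (fW w) * ennreal (Rf x y z w) \<partial>lborel) \<partial>lborel) \<partial>lborel) \<partial>lborel)
      \<le> (\<integral>\<^sup>+x. ennreal (fX x) * 1 \<partial>lborel)"
    by (intro nn_integral_mono mult_left_mono inner) simp
  also have "\<dots> = 1" using dens_int1[OF P dX] by simp
  finally show ?thesis unfolding J .
qed

theorem mainTheorem13:
  fixes M :: "'a measure" and X Y Z W :: "'a \<Rightarrow> real"
  assumes "prob_space M"
    and "prob_space.indep_vars M (\<lambda>_. borel) (\<lambda>i::nat. [X, Y, Z, W] ! i) {0, 1, 2, 3}"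
    and "has_finite_diff_entropy M X" and "has_finite_diff_entropy M Y"
    and "has_finite_diff_entropy M Z" and "has_finite_diff_entropy M W"
    and "has_finite_diff_entropy M (\<lambda>\<omega>. X \<omega> + Y \<omega>)"
    and "has_finite_diff_entropy M (\<lambda>\<omega>. Y \<omega> + Z \<omega>)"
    and "has_finite_diff_entropy M (\<lambda>\<omega>. Z \<omega> + W \<omega>)"
    and "has_finite_diff_entropy M (\<lambda>\<omega>. X \<omega> + Y \<omega> + Z \<omega> + W \<omega>)"
  shows "diff_entropy M (\<lambda>\<omega>. X \<omega> + Y \<omega> + Z \<omega> + W \<omega>) + diff_entropy M Y + diff_entropy M Z
         \<le> diff_entropy M (\<lambda>\<omega>. X \<omega> + Y \<omega>) + diff_entropy M (\<lambda>\<omega>. Y \<omega> + Z \<omega>)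
           + diff_entropy M (\<lambda>\<omega>. Z \<omega> + W \<omega>)"
proof -
  interpret prob_space M by (rule assms(1))
  note P = assms(1)
  obtain fX where dX: "distributed M lborel X (\<lambda>x. ennreal (fX x))" and nX: "\<And>x. 0 \<le> fX x"
    using assms(3) unfolding has_finite_diff_entropy_def by blast
  obtain fY where dY: "distributed M lborel Y (\<lambda>x. ennreal (fY x))" and nY: "\<And>x. 0 \<le> fY x"
    and iY: "integrable lborel (\<lambda>x. fY x * ln (fY x))"
    using assms(4) unfolding has_finite_diff_entropy_def by blast
  obtain fZ where dZ: "distributed M lborel Z (\<lambda>x. ennreal (fZ x))" and nZ: "\<And>x. 0 \<le> fZ x"
    and iZ: "integrable lborel (\<lambda>x. fZ x * ln (fZ x))"
    using assms(5) unfolding has_finite_diff_entropy_def by blast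
  obtain fW where dW: "distributed M lborel W (\<lambda>x. ennreal (fW x))" and nW: "\<And>x. 0 \<le> fW x"
    using assms(6) unfolding has_finite_diff_entropy_def by blast
  obtain fA where dA: "distributed M lborel (\<lambda>\<omega>. X \<omega> + Y \<omega>) (\<lambda>x. ennreal (fA x))" and nA: "\<And>x. 0 \<le> fA x"
    and iA: "integrable lborel (\<lambda>x. fA x * ln (fA x))"
    using assms(7) unfolding has_finite_diff_entropy_def by blast
  obtain fB where dB: "distributed M lborel (\<lambda>\<omega>. Y \<omega> + Z \<omega>) (\<lambda>x. ennreal (fB x))" and nB: "\<And>x. 0 \<le> fB x"
    and iB: "integrable lborel (\<lambda>x. fB x * ln (fB x))"
    using assms(8) unfolding has_finite_diff_entropy_def by blast
  obtain fC where dC: "distributed M lborel (\<lambda>\<omega>. Z \<omega> + W \<omega>) (\<lambda>x. ennreal (fC x))" and nC: "\<And>x. 0 \<le> fC x"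
    and iC: "integrable lborel (\<lambda>x. fC x * ln (fC x))"
    using assms(9) unfolding has_finite_diff_entropy_def by blast
  obtain fS where dS: "distributed M lborel (\<lambda>\<omega>. X \<omega> + Y \<omega> + Z \<omega> + W \<omega>) (\<lambda>x. ennreal (fS x))" and nS: "\<And>x. 0 \<le> fS x"
    and iS: "integrable lborel (\<lambda>x. fS x * ln (fS x))"
    using assms(10) unfolding has_finite_diff_entropy_def by blast
  note eY = dent[OF P dY nY iY] and eZ = dent[OF P dZ nZ iZ] and eA = dent[OF P dA nA iA]
    and eB = dent[OF P dB nB iB] and eC = dent[OF P dC nC iC] and eS = dent[OF P dS nS iS]
  have m[measurable]: "fY \<in> borel_measurable borel" "fZ \<in> borel_measurable borel"
    "fA \<in> borel_measurable borel" "fB \<in> borel_measurable borel"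
    "fC \<in> borel_measurable borel" "fS \<in> borel_measurable borel"
    using distributed_real_measurable[OF _ dY] distributed_real_measurable[OF _ dZ]
      distributed_real_measurable[OF _ dA] distributed_real_measurable[OF _ dB]
      distributed_real_measurable[OF _ dC] distributed_real_measurable[OF _ dS] nY nZ nA nB nC nS
    by auto
  have mX[measurable]: "X \<in> borel_measurable M" using dX by (simp add: distributed_def)
  have mY[measurable]: "Y \<in> borel_measurable M" using dY by (simp add: distributed_def)
  have mZ[measurable]: "Z \<in> borel_measurable M" using dZ by (simp add: distributed_def)
  have mW[measurable]: "W \<in> borel_measurable M" using dW by (simp add: distributed_def)
  define L where "L = (\<lambda>\<omega>. ln (fA (X \<omega> + Y \<omega>)) + ln (fB (Y \<omega> + Z \<omega>)) + ln (fC (Z \<omega> + W \<omega>))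
     - ln (fS (X \<omega> + Y \<omega> + Z \<omega> + W \<omega>)) - ln (fY (Y \<omega>)) - ln (fZ (Z \<omega>)))"
  define R where "R = (\<lambda>\<omega>. fA (X \<omega> + Y \<omega>) * fB (Y \<omega> + Z \<omega>) * fC (Z \<omega> + W \<omega>) /
            (fS (X \<omega> + Y \<omega> + Z \<omega> + W \<omega>) * fY (Y \<omega>) * fZ (Z \<omega>)))"
  have intL: "integrable M L"
    unfolding L_def using eY(3) eZ(3) eA(3) eB(3) eC(3) eS(3) by auto
  have IL: "(\<integral>\<omega>. L \<omega> \<partial>M) = (\<integral>x. fA x * ln (fA x) \<partial>lborel) + (\<integral>x. fB x * ln (fB x) \<partial>lborel)
     + (\<integral>x. fC x * ln (fC x) \<partial>lborel) - (\<integral>x. fS x * ln (fS x) \<partial>lborel)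
     - (\<integral>x. fY x * ln (fY x) \<partial>lborel) - (\<integral>x. fZ x * ln (fZ x) \<partial>lborel)"
    unfolding L_def eY(2) eZ(2) eA(2) eB(2) eC(2) eS(2)
    using eY(3) eZ(3) eA(3) eB(3) eC(3) eS(3) by simp
  have posA: "AE \<omega> in M. 0 < fA (X \<omega> + Y \<omega>)" using distributed_AE2[OF dA, of "\<lambda>x. 0 < fA x"] by simp
  have posB: "AE \<omega> in M. 0 < fB (Y \<omega> + Z \<omega>)" using distributed_AE2[OF dB, of "\<lambda>x. 0 < fB x"] by simp
  have posC: "AE \<omega> in M. 0 < fC (Z \<omega> + W \<omega>)" using distributed_AE2[OF dC, of "\<lambda>x. 0 < fC x"] by simp
  have posS: "AE \<omega> in M. 0 < fS (X \<omega> + Y \<omega> + Z \<omega> + W \<omega>)" using distributed_AE2[OF dS, of "\<lambda>x. 0 < fS x"] by simp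
  have posY: "AE \<omega> in M. 0 < fY (Y \<omega>)" using distributed_AE2[OF dY, of "\<lambda>x. 0 < fY x"] by simp
  have posZ: "AE \<omega> in M. 0 < fZ (Z \<omega>)" using distributed_AE2[OF dZ, of "\<lambda>x. 0 < fZ x"] by simp
  have LR: "AE \<omega> in M. L \<omega> + 1 \<le> R \<omega>"
    using posA posB posC posS posY posZ
  proof eventually_elim
    case (elim \<omega>)
    let ?a = "fA (X \<omega> + Y \<omega>)" and ?b = "fB (Y \<omega> + Z \<omega>)" and ?c = "fC (Z \<omega> + W \<omega>)"
      and ?s = "fS (X \<omega> + Y \<omega> + Z \<omega> + W \<omega>)" and ?y = "fY (Y \<omega>)" and ?z = "fZ (Z \<omega>)"
    have "L \<omega> = ln (?a * ?b * ?c / (?s * ?y * ?z))"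
      unfolding L_def using elim by (simp add: ln_mult ln_div)
    also have "\<dots> \<le> ?a * ?b * ?c / (?s * ?y * ?z) - 1"
      by (rule ln_le_minus_one) (use elim in simp)
    finally show ?case unfolding R_def by simp
  qed
  have Rnn: "\<And>\<omega>. 0 \<le> R \<omega>" unfolding R_def
    using nA nB nC nS nY nZ by (auto intro!: divide_nonneg_nonneg mult_nonneg_nonneg)
  have intM: "integrable M (\<lambda>\<omega>. max (L \<omega> + 1) 0)"
    using intL by (intro integrable_max) auto
  have "ennreal (\<integral>\<omega>. max (L \<omega> + 1) 0 \<partial>M) = (\<integral>\<^sup>+\<omega>. ennreal (max (L \<omega> + 1) 0) \<partial>M)"
    by (rule nn_integral_eq_integral[symmetric]) (use intM in auto)
  also have "\<dots> \<le> (\<integral>\<^sup>+\<omega>. ennreal (R \<omega>) \<partial>M)"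
    using LR by (intro nn_integral_mono_AE) (auto elim!: eventually_mono intro!: ennreal_leI simp: Rnn)
  also have "\<dots> \<le> 1"
    unfolding R_def by (rule core[OF P assms(2) dX dY dZ dW dA dB dC dS nX nY nZ nW nA nB nC nS])
  finally have le1: "(\<integral>\<omega>. max (L \<omega> + 1) 0 \<partial>M) \<le> 1"
    by (simp add: ennreal_le_1)
  have "(\<integral>\<omega>. L \<omega> + 1 \<partial>M) \<le> (\<integral>\<omega>. max (L \<omega> + 1) 0 \<partial>M)"
    using intL intM by (intro integral_mono) auto
  moreover have "(\<integral>\<omega>. L \<omega> + 1 \<partial>M) = (\<integral>\<omega>. L \<omega> \<partial>M) + 1"
    using intL by (simp add: prob_space)
  ultimately have "(\<integral>\<omega>. L \<omega> \<partial>M) \<le> 0" using le1 by simp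
  then show ?thesis
    unfolding eY(1) eZ(1) eA(1) eB(1) eC(1) eS(1) IL by simp
qed

end
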